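(* Let $I\subset K[x,y]$ be a monomial ideal. Then the following are equivalent: (1) $I$ satisfies the non-pure dual exchange property; (2) $I$ satisfies the non-pure exchange property; (3) $I$ is componentwise polymatroidal.
   Context: For a monomial $u$, $\deg_{x_i}(u)$ is the exponent of the variable $x_i$ in $u$; $G(I)$ is the minimal monomial generating set. A monomial ideal generated in a single degree is polymatroidal if for all $u,v\in G(I)$ and all $i$ with $\deg_{x_i}(u)>\deg_{x_i}(v)$ there exists $j$ with $\deg_{x_j}(u)<\deg_{x_j}(v)$ and $x_j(u/x_i)\in I$. $I_{\langle j\rangle}$ denotes the ideal generated by all monomials of degree $j$ in $I$; $I$ is componentwise polymatroidal if every nonzero $I_{\langle j\rangle}$ is polymatroidal. $I$ satisfies the non-pure exchange property if for all $u,v \in G(I)$ with $\deg(u)\leq \deg(v)$ and all $i$ with $\deg_{x_i}(v) > \deg_{x_i}(u)$, there exists $j$ with $\deg_{x_j}(v)< \deg_{x_j}(u)$ and $x_j(v/x_i) \in I$. $I$ satisfies the non-pure dual exchange property if for all $u,v \in G(I)$ with $\deg(u) \leq \deg(v)$ and all $i$ with $\deg_{x_i}(v) < \deg_{x_i}(u)$, there exists $j$ with $\deg_{x_j}(v) > \deg_{x_j}(u)$ and $x_i(v/x_j) \in I$. *)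

theory Defs
  imports Main
begin

text \<open>Monomials in the polynomial ring K[x_0,...,x_{n-1}] are represented by their
exponent vectors u :: nat => nat (deg_{x_i}(u) = u i), vanishing outside {0..<n}.
A monomial ideal is represented by the set of monomials it contains (which determines
it uniquely, independently of the field K): an upward closed set of monomials
w.r.t. divisibility.\<close>

definition monomials :: "nat \<Rightarrow> (nat \<Rightarrow> nat) set" where
  "monomials n = {u. \<forall>i\<ge>n. u i = 0}"

definition mdvd :: "(nat \<Rightarrow> nat) \<Rightarrow> (nat \<Rightarrow> nat) \<Rightarrow> bool" where
  "mdvd u v \<longleftrightarrow> (\<forall>i. u i \<le> v i)"

definition mono_ideal :: "nat \<Rightarrow> (nat \<Rightarrow> nat) set \<Rightarrow> bool" where
  "mono_ideal n I \<longleftrightarrow> I \<subseteq> monomials n \<and>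
     (\<forall>u\<in>I. \<forall>v\<in>monomials n. mdvd u v \<longrightarrow> v \<in> I)"

definition mdeg :: "nat \<Rightarrow> (nat \<Rightarrow> nat) \<Rightarrow> nat" where
  "mdeg n u = (\<Sum>i<n. u i)"

text \<open>x_j * (u / x_i) (used only when x_i divides u).\<close>
definition swapvar :: "nat \<Rightarrow> nat \<Rightarrow> (nat \<Rightarrow> nat) \<Rightarrow> (nat \<Rightarrow> nat)" where
  "swapvar j i u = (u(i := u i - 1))(j := (u(i := u i - 1)) j + 1)"

definition gens :: "(nat \<Rightarrow> nat) set \<Rightarrow> (nat \<Rightarrow> nat) set" where
  "gens I = {u \<in> I. \<forall>v\<in>I. mdvd v u \<longrightarrow> v = u}"

definition comp_ideal :: "nat \<Rightarrow> (nat \<Rightarrow> nat) set \<Rightarrow> nat \<Rightarrow> (nat \<Rightarrow> nat) set" where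
  "comp_ideal n I d = {w \<in> monomials n. \<exists>u\<in>I. mdeg n u = d \<and> mdvd u w}"

definition polymatroidal :: "nat \<Rightarrow> (nat \<Rightarrow> nat) set \<Rightarrow> bool" where
  "polymatroidal n I \<longleftrightarrow>
     (\<exists>d. \<forall>u\<in>gens I. mdeg n u = d) \<and>
     (\<forall>u\<in>gens I. \<forall>v\<in>gens I. \<forall>i<n. u i > v i \<longrightarrow>
        (\<exists>j<n. u j < v j \<and> swapvar j i u \<in> I))"

definition componentwise_polymatroidal :: "nat \<Rightarrow> (nat \<Rightarrow> nat) set \<Rightarrow> bool" where
  "componentwise_polymatroidal n I \<longleftrightarrow>
     (\<forall>d. comp_ideal n I d \<noteq> {} \<longrightarrow> polymatroidal n (comp_ideal n I d))"

definition nonpure_exchange :: "nat \<Rightarrow> (nat \<Rightarrow> nat) set \<Rightarrow> bool" where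
  "nonpure_exchange n I \<longleftrightarrow>
     (\<forall>u\<in>gens I. \<forall>v\<in>gens I. mdeg n u \<le> mdeg n v \<longrightarrow>
        (\<forall>i<n. v i > u i \<longrightarrow> (\<exists>j<n. v j < u j \<and> swapvar j i v \<in> I)))"

definition nonpure_dual_exchange :: "nat \<Rightarrow> (nat \<Rightarrow> nat) set \<Rightarrow> bool" where
  "nonpure_dual_exchange n I \<longleftrightarrow>
     (\<forall>u\<in>gens I. \<forall>v\<in>gens I. mdeg n u \<le> mdeg n v \<longrightarrow>
        (\<forall>i<n. v i < u i \<longrightarrow> (\<exists>j<n. v j > u j \<and> swapvar i j v \<in> I)))"

end

theory Submission
  imports Defs
begin

lemma less2: "(i::nat) < 2 \<longleftrightarrow> i = 0 \<or> i = 1" by auto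

lemma mdeg2: "mdeg 2 u = u 0 + u 1"
  by (simp add: mdeg_def numeral_2_eq_2)

lemma mon0: "u \<in> monomials 2 \<Longrightarrow> \<not> i < 2 \<Longrightarrow> u i = 0"
  unfolding monomials_def by simp

lemma mdvd2: assumes "u \<in> monomials 2" "v \<in> monomials 2"
  shows "mdvd u v \<longleftrightarrow> u 0 \<le> v 0 \<and> u 1 \<le> v 1"
proof
  assume "mdvd u v" thus "u 0 \<le> v 0 \<and> u 1 \<le> v 1" unfolding mdvd_def by simp
next
  assume h: "u 0 \<le> v 0 \<and> u 1 \<le> v 1"
  show "mdvd u v" unfolding mdvd_def
  proof
    fix i show "u i \<le> v i"
    proof (cases "i < 2")
      case True thus ?thesis using h less2 by auto
    next
      case False thus ?thesis using mon0[OF assms(1)] by simp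
    qed
  qed
qed

lemma eq2: assumes "u \<in> monomials 2" "v \<in> monomials 2"
  shows "u = v \<longleftrightarrow> u 0 = v 0 \<and> u 1 = v 1"
proof
  assume h: "u 0 = v 0 \<and> u 1 = v 1"
  show "u = v"
  proof
    fix i show "u i = v i"
    proof (cases "i < 2")
      case True thus ?thesis using h less2 by auto
    next
      case False thus ?thesis using mon0[OF assms(1)] mon0[OF assms(2)] by simp
    qed
  qed
qed simp


lemma oth: "i < 2 \<Longrightarrow> 1 - i < 2 \<and> 1 - i \<noteq> i \<and> 1 - (1 - i) = (i::nat)" using less2[of i] by auto

lemma oth2: "i < 2 \<Longrightarrow> j < 2 \<Longrightarrow> j \<noteq> i \<Longrightarrow> j = 1 - (i::nat)" by auto

lemma mdeg2i: "i < 2 \<Longrightarrow> mdeg 2 u = u i + u (1 - i)"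
  using mdeg2[of u] less2[of i] by auto

lemma mdvd2i: "u \<in> monomials 2 \<Longrightarrow> v \<in> monomials 2 \<Longrightarrow> i < 2 \<Longrightarrow>
   mdvd u v \<longleftrightarrow> u i \<le> v i \<and> u (1-i) \<le> v (1-i)"
  using mdvd2[of u v] less2[of i] by auto

lemma eq2i: "u \<in> monomials 2 \<Longrightarrow> v \<in> monomials 2 \<Longrightarrow> i < 2 \<Longrightarrow>
   u = v \<longleftrightarrow> u i = v i \<and> u (1-i) = v (1-i)"
  using eq2[of u v] less2[of i] by auto

lemma sw_i: "i < 2 \<Longrightarrow> swapvar (1-i) i v i = v i - 1"
proof -
  assume "i < 2" hence "1 - i \<noteq> i" using oth by blast
  thus ?thesis unfolding swapvar_def by simp
qed

lemma sw_k: "i < 2 \<Longrightarrow> swapvar (1-i) i v (1-i) = v (1-i) + 1"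
proof -
  assume "i < 2" hence "1 - i \<noteq> i" using oth by blast
  thus ?thesis unfolding swapvar_def by simp
qed

lemma sw_mon: "i < 2 \<Longrightarrow> j < 2 \<Longrightarrow> v \<in> monomials 2 \<Longrightarrow> swapvar j i v \<in> monomials 2"
  unfolding monomials_def swapvar_def by auto

lemma up: "mono_ideal 2 I \<Longrightarrow> w \<in> I \<Longrightarrow> t \<in> monomials 2 \<Longrightarrow> i < 2 \<Longrightarrow>
   w i \<le> t i \<Longrightarrow> w (1-i) \<le> t (1-i) \<Longrightarrow> t \<in> I"
  unfolding mono_ideal_def using mdvd2i[of w t i] by blast

lemma inI_mon: "mono_ideal 2 I \<Longrightarrow> w \<in> I \<Longrightarrow> w \<in> monomials 2"
  unfolding mono_ideal_def by blast

lemma gen_below: assumes "mono_ideal 2 I" "w \<in> I" shows "\<exists>g\<in>gens I. g 0 \<le> w 0 \<and> g 1 \<le> w 1"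
  using assms(2)
proof (induction "w 0 + w 1" arbitrary: w rule: less_induct)
  case less
  have wm: "w \<in> monomials 2" using less.prems assms(1) inI_mon by blast
  show ?case
  proof (cases "w \<in> gens I")
    case True thus ?thesis by auto
  next
    case False
    then obtain v where v: "v \<in> I" "mdvd v w" "v \<noteq> w" using less.prems unfolding gens_def by auto
    have vm: "v \<in> monomials 2" using v(1) assms(1) inI_mon by blast
    have a: "v 0 \<le> w 0" "v 1 \<le> w 1" using v(2) mdvd2[OF vm wm] by auto
    have "v 0 \<noteq> w 0 \<or> v 1 \<noteq> w 1" using v(3) eq2[OF vm wm] by auto
    hence b: "v 0 + v 1 < w 0 + w 1" using a by linarith
    obtain g where "g \<in> gens I" "g 0 \<le> v 0" "g 1 \<le> v 1" using less(1)[OF b v(1)] by blast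
    thus ?thesis using a by (meson order.trans)
  qed
qed

lemma gen_below_i: assumes "mono_ideal 2 I" "w \<in> I" "i < 2"
  shows "\<exists>g\<in>gens I. g i \<le> w i \<and> g (1-i) \<le> w (1-i)"
  using gen_below[OF assms(1,2)] less2[of i] assms(3) by auto

lemma gens_I: "u \<in> gens I \<Longrightarrow> u \<in> I" unfolding gens_def by simp

lemma gens_incomp: assumes "mono_ideal 2 I" "u \<in> gens I" "v \<in> gens I" "i < 2" "v i < u i"
  shows "u (1-i) < v (1-i)"
proof (rule ccontr)
  assume h: "\<not> ?thesis"
  have um: "u \<in> monomials 2" and vm: "v \<in> monomials 2"
    using assms(1-3) inI_mon gens_I by blast+
  have "mdvd v u" using assms(4,5) h mdvd2i[OF vm um assms(4)] by simp
  hence "v = u" using assms(2,3) unfolding gens_def by auto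
  thus False using assms(5) by simp
qed

definition EX2 :: "(nat \<Rightarrow> nat) set \<Rightarrow> bool" where
  "EX2 I \<longleftrightarrow> (\<forall>u\<in>gens I. \<forall>v\<in>gens I. mdeg 2 u \<le> mdeg 2 v \<longrightarrow>
     (\<forall>i<2. u i < v i \<longrightarrow> swapvar (1-i) i v \<in> I))"

definition CP2 :: "(nat \<Rightarrow> nat) set \<Rightarrow> bool" where
  "CP2 I \<longleftrightarrow> (\<forall>u\<in>I. \<forall>v\<in>I. mdeg 2 u = mdeg 2 v \<longrightarrow>
     (\<forall>i<2. v i < u i \<longrightarrow> swapvar (1-i) i u \<in> I))"

lemma A: assumes "mono_ideal 2 I" shows "nonpure_exchange 2 I \<longleftrightarrow> EX2 I"
proof
  assume h: "nonpure_exchange 2 I"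
  show "EX2 I" unfolding EX2_def
  proof (intro ballI impI allI)
    fix u v i assume u: "u \<in> gens I" and v: "v \<in> gens I" and d: "mdeg 2 u \<le> mdeg 2 v"
      and i: "i < 2" and lt: "u i < v i"
    obtain j where j: "j < 2" "v j < u j" "swapvar j i v \<in> I"
      using h u v d i lt unfolding nonpure_exchange_def by blast
    have "j \<noteq> i" using j(2) lt by auto
    hence "j = 1 - i" using oth2 i j(1) by blast
    thus "swapvar (1-i) i v \<in> I" using j(3) by simp
  qed
next
  assume h: "EX2 I"
  show "nonpure_exchange 2 I" unfolding nonpure_exchange_def
  proof (intro ballI impI allI)
    fix u v i assume u: "u \<in> gens I" and v: "v \<in> gens I" and d: "mdeg 2 u \<le> mdeg 2 v"
      and i: "i < 2" and lt: "u i < v i"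
    have "v (1-i) < u (1-i)" using gens_incomp[OF assms v u i lt] .
    moreover have "swapvar (1-i) i v \<in> I" using h u v d i lt unfolding EX2_def by blast
    ultimately show "\<exists>j<2. v j < u j \<and> swapvar j i v \<in> I" using oth[OF i] by blast
  qed
qed

lemma B: assumes "mono_ideal 2 I" shows "nonpure_dual_exchange 2 I \<longleftrightarrow> EX2 I"
proof
  assume h: "nonpure_dual_exchange 2 I"
  show "EX2 I" unfolding EX2_def
  proof (intro ballI impI allI)
    fix u v i assume u: "u \<in> gens I" and v: "v \<in> gens I" and d: "mdeg 2 u \<le> mdeg 2 v"
      and i: "i < 2" and lt: "u i < v i"
    define k where "k = 1 - i"
    have k: "k < 2" "k \<noteq> i" "1 - k = i" using oth[OF i] k_def by auto
    have "v k < u k" using gens_incomp[OF assms v u i lt] k_def by simp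
    then obtain j where j: "j < 2" "v j > u j" "swapvar k j v \<in> I"
      using h u v d k(1) unfolding nonpure_dual_exchange_def by blast
    have "j \<noteq> k" using j(2) \<open>v k < u k\<close> by auto
    hence "j = i" using oth2[OF k(1) j(1)] k(3) by simp
    thus "swapvar (1-i) i v \<in> I" using j(3) k_def by simp
  qed
next
  assume h: "EX2 I"
  show "nonpure_dual_exchange 2 I" unfolding nonpure_dual_exchange_def
  proof (intro ballI impI allI)
    fix u v i assume u: "u \<in> gens I" and v: "v \<in> gens I" and d: "mdeg 2 u \<le> mdeg 2 v"
      and i: "i < 2" and lt: "v i < u i"
    define k where "k = 1 - i"
    have k: "k < 2" "k \<noteq> i" "1 - k = i" using oth[OF i] k_def by auto
    have lk: "u k < v k" using gens_incomp[OF assms u v i lt] k_def by simp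
    have "swapvar (1-k) k v \<in> I" using h u v d k(1) lk unfolding EX2_def by blast
    thus "\<exists>j<2. u j < v j \<and> swapvar i j v \<in> I" using k lk by auto
  qed
qed


lemma samedeg: assumes "w \<in> monomials 2" "s \<in> monomials 2" "mdvd w s" "mdeg 2 w = mdeg 2 s"
  shows "w = s"
  using assms mdvd2[OF assms(1,2)] eq2[OF assms(1,2)] mdeg2[of w] mdeg2[of s] by simp

lemma gens_comp: assumes "mono_ideal 2 I"
  shows "gens (comp_ideal 2 I d) = {u \<in> I. mdeg 2 u = d}"
proof
  show "gens (comp_ideal 2 I d) \<subseteq> {u \<in> I. mdeg 2 u = d}"
  proof
    fix u assume u: "u \<in> gens (comp_ideal 2 I d)"
    hence uc: "u \<in> comp_ideal 2 I d" using gens_I by blast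
    then obtain w where w: "w \<in> I" "mdeg 2 w = d" "mdvd w u" and um: "u \<in> monomials 2"
      unfolding comp_ideal_def by blast
    have wm: "w \<in> monomials 2" using inI_mon[OF assms w(1)] .
    have "w \<in> comp_ideal 2 I d" unfolding comp_ideal_def using wm w by (auto simp: mdvd_def)
    hence "w = u" using u w(3) unfolding gens_def by blast
    thus "u \<in> {u \<in> I. mdeg 2 u = d}" using w by simp
  qed
next
  show "{u \<in> I. mdeg 2 u = d} \<subseteq> gens (comp_ideal 2 I d)"
  proof
    fix u assume u: "u \<in> {u \<in> I. mdeg 2 u = d}"
    have um: "u \<in> monomials 2" using u inI_mon[OF assms] by blast
    have uc: "u \<in> comp_ideal 2 I d" unfolding comp_ideal_def using um u by (auto simp: mdvd_def)
    have "\<forall>v\<in>comp_ideal 2 I d. mdvd v u \<longrightarrow> v = u"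
    proof (intro ballI impI)
      fix v assume v: "v \<in> comp_ideal 2 I d" "mdvd v u"
      then obtain w where w: "w \<in> I" "mdeg 2 w = d" "mdvd w v" and vm: "v \<in> monomials 2"
        unfolding comp_ideal_def by blast
      have wm: "w \<in> monomials 2" using inI_mon[OF assms w(1)] .
      have "mdvd w u" using w(3) v(2) unfolding mdvd_def using order.trans by blast
      hence "w = u" using samedeg[OF wm um] w(2) u by simp
      thus "v = u" using w(3) v(2) unfolding mdvd_def by (simp add: antisym ext)
    qed
    thus "u \<in> gens (comp_ideal 2 I d)" using uc unfolding gens_def by blast
  qed
qed

lemma sw_deg: "i < 2 \<Longrightarrow> 0 < v i \<Longrightarrow> mdeg 2 (swapvar (1-i) i v) = mdeg 2 v"
  using mdeg2i[of i "swapvar (1-i) i v"] mdeg2i[of i v] sw_i[of i v] sw_k[of i v] by simp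

lemma sw_comp: assumes "mono_ideal 2 I" "i < 2" "0 < u i" "u \<in> monomials 2"
  shows "swapvar (1-i) i u \<in> comp_ideal 2 I (mdeg 2 u) \<longleftrightarrow> swapvar (1-i) i u \<in> I"
proof -
  let ?s = "swapvar (1-i) i u"
  have sm: "?s \<in> monomials 2" using sw_mon[OF assms(2) _ assms(4)] oth[OF assms(2)] by blast
  have sd: "mdeg 2 ?s = mdeg 2 u" using sw_deg[of i u, OF assms(2,3)] .
  show ?thesis
  proof
    assume "?s \<in> comp_ideal 2 I (mdeg 2 u)"
    then obtain w where w: "w \<in> I" "mdeg 2 w = mdeg 2 u" "mdvd w ?s" unfolding comp_ideal_def by blast
    have "w = ?s" using samedeg[OF inI_mon[OF assms(1) w(1)] sm w(3)] w(2) sd by simp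
    thus "?s \<in> I" using w(1) by simp
  next
    assume "?s \<in> I" thus "?s \<in> comp_ideal 2 I (mdeg 2 u)"
      unfolding comp_ideal_def using sm sd by (auto simp: mdvd_def)
  qed
qed

lemma C: assumes "mono_ideal 2 I" shows "componentwise_polymatroidal 2 I \<longleftrightarrow> CP2 I"
proof
  assume h: "componentwise_polymatroidal 2 I"
  show "CP2 I" unfolding CP2_def
  proof (intro ballI impI allI)
    fix u v i assume u: "u \<in> I" and v: "v \<in> I" and d: "mdeg 2 u = mdeg 2 v"
      and i: "i < 2" and lt: "v i < u i"
    have um: "u \<in> monomials 2" using inI_mon[OF assms u] .
    have "u \<in> comp_ideal 2 I (mdeg 2 u)" unfolding comp_ideal_def using um u by (auto simp: mdvd_def)
    hence pm: "polymatroidal 2 (comp_ideal 2 I (mdeg 2 u))" using h unfolding componentwise_polymatroidal_def by blast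
    have ug: "u \<in> gens (comp_ideal 2 I (mdeg 2 u))" and vg: "v \<in> gens (comp_ideal 2 I (mdeg 2 u))"
      using gens_comp[OF assms] u v d by auto
    obtain j where j: "j < 2" "u j < v j" "swapvar j i u \<in> comp_ideal 2 I (mdeg 2 u)"
      using pm ug vg i lt unfolding polymatroidal_def by blast
    have "j \<noteq> i" using j(2) lt by auto
    hence "j = 1 - i" using oth2 i j(1) by blast
    thus "swapvar (1-i) i u \<in> I" using j(3) sw_comp[OF assms i _ um] lt by simp
  qed
next
  assume h: "CP2 I"
  show "componentwise_polymatroidal 2 I" unfolding componentwise_polymatroidal_def
  proof (intro allI impI)
    fix d assume "comp_ideal 2 I d \<noteq> {}"
    show "polymatroidal 2 (comp_ideal 2 I d)" unfolding polymatroidal_def gens_comp[OF assms]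
    proof (intro conjI ballI allI impI)
      show "\<exists>d'. \<forall>u\<in>{u \<in> I. mdeg 2 u = d}. mdeg 2 u = d'" by blast
    next
      fix u v i assume u: "u \<in> {u \<in> I. mdeg 2 u = d}" and v: "v \<in> {u \<in> I. mdeg 2 u = d}"
        and i: "i < 2" and lt: "v i < u i"
      have um: "u \<in> monomials 2" using inI_mon[OF assms] u by blast
      have s: "swapvar (1-i) i u \<in> I" using h u v i lt unfolding CP2_def by auto
      have "u (1-i) < v (1-i)" using u v mdeg2i[OF i, of u] mdeg2i[OF i, of v] lt by simp
      moreover have "swapvar (1-i) i u \<in> comp_ideal 2 I d"
        using sw_comp[OF assms i _ um] lt s u by simp
      ultimately show "\<exists>j<2. u j < v j \<and> swapvar j i u \<in> comp_ideal 2 I d"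
        using oth[OF i] by blast
    qed
  qed
qed

lemma D: assumes "mono_ideal 2 I" "CP2 I" shows "EX2 I"
  unfolding EX2_def
proof (intro ballI impI allI)
  fix u v i assume u: "u \<in> gens I" and v: "v \<in> gens I" and d: "mdeg 2 u \<le> mdeg 2 v"
    and i: "i < 2" and lt: "u i < v i"
  define k where "k = 1 - i"
  have k: "k < 2" "k \<noteq> i" "1 - k = i" using oth[OF i] k_def by auto
  define u' where "u' = u(k := u k + (mdeg 2 v - mdeg 2 u))"
  have uI: "u \<in> I" and vI: "v \<in> I" using u v gens_I by auto
  have um: "u \<in> monomials 2" using inI_mon[OF assms(1) uI] .
  have u'm: "u' \<in> monomials 2" using um k(1) unfolding u'_def monomials_def by auto
  have u'i: "u' i = u i" and u'k: "u' k = u k + (mdeg 2 v - mdeg 2 u)" using k(2) unfolding u'_def by auto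
  have u'I: "u' \<in> I" using up[OF assms(1) uI u'm i] u'i u'k k_def by simp
  have "mdeg 2 u' = mdeg 2 v" using mdeg2i[OF i, of u'] mdeg2i[OF i, of u] u'i u'k k_def d by simp
  thus "swapvar (1-i) i v \<in> I" using assms(2) vI u'I i lt u'i unfolding CP2_def by simp
qed


lemma E_aux: assumes I: "mono_ideal 2 I" and h: "EX2 I" and i: "i < 2" and uI: "u \<in> I"
  and ui: "0 < u i"
  shows "\<forall>w\<in>I. w (1-i) = n \<longrightarrow> w i \<le> u i - 1 \<longrightarrow> mdeg 2 w \<le> mdeg 2 u \<longrightarrow>
           swapvar (1-i) i u \<in> I"
proof (induction n rule: less_induct)
  case (less n)
  define k where "k = 1 - i"
  have k: "k < 2" "k \<noteq> i" "1 - k = i" using oth[OF i] k_def by auto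
  let ?t = "swapvar k i u"
  have um: "u \<in> monomials 2" using inI_mon[OF I uI] .
  have tm: "?t \<in> monomials 2" using sw_mon[OF i k(1) um] .
  have ti: "?t i = u i - 1" and tk: "?t k = u k + 1" using sw_i[OF i] sw_k[OF i] k_def by auto
  have du: "mdeg 2 u = u i + u k" using mdeg2i[OF i] k_def by simp
  show ?case
  proof (intro ballI impI)
    fix w assume w: "w \<in> I" "w (1-i) = n" "w i \<le> u i - 1" "mdeg 2 w \<le> mdeg 2 u"
    have dw: "mdeg 2 w = w i + w k" using mdeg2i[OF i] k_def by simp
    obtain w0 where w0: "w0 \<in> gens I" "w0 i \<le> w i" "w0 k \<le> w k"
      using gen_below_i[OF I w(1) i] k_def by blast
    have w0I: "w0 \<in> I" using gens_I[OF w0(1)] .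
    have dw0: "mdeg 2 w0 = w0 i + w0 k" using mdeg2i[OF i] k_def by simp
    show "swapvar (1-i) i u \<in> I"
    proof (cases "w0 k \<le> ?t k")
      case True
      have "?t \<in> I" using up[OF I w0I tm i] True ti w0(2) w(3) k_def by simp
      thus ?thesis using k_def by simp
    next
      case False
      obtain u0 where u0: "u0 \<in> gens I" "u0 i \<le> u i" "u0 k \<le> u k"
        using gen_below_i[OF I uI i] k_def by blast
      have u0I: "u0 \<in> I" using gens_I[OF u0(1)] .
      have du0: "mdeg 2 u0 = u0 i + u0 k" using mdeg2i[OF i] k_def by simp
      show ?thesis
      proof (cases "u0 i < u i")
        case True
        have "?t \<in> I" using up[OF I u0I tm i] True ti tk u0(3) k_def by simp
        thus ?thesis using k_def by simp
      next
        case False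
        hence u0i: "u0 i = u i" using u0(2) by simp
        have lt1: "w0 i < u0 i" using w0(2) w(3) u0i ui by simp
        show ?thesis
        proof (cases "mdeg 2 w0 \<le> mdeg 2 u0")
          case True
          have s: "swapvar k i u0 \<in> I" using h w0(1) u0(1) True i lt1 k_def unfolding EX2_def by blast
          have sm: "swapvar k i u0 \<in> monomials 2" using sw_mon[OF i k(1) inI_mon[OF I u0I]] .
          have "?t \<in> I" using up[OF I s tm i] sw_i[OF i, of u0] sw_k[OF i, of u0] k_def ti tk u0i u0(3)
            by simp
          thus ?thesis using k_def by simp
        next
          case False
          have lt2: "u0 k < w0 k" using \<open>\<not> w0 k \<le> ?t k\<close> tk u0(3) by simp
          have s: "swapvar (1-k) k w0 \<in> I"
            using h u0(1) w0(1) False k(1) lt2 unfolding EX2_def by auto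
          let ?w' = "swapvar (1-k) k w0"
          have w'i: "?w' i = w0 i + 1" and w'k: "?w' k = w0 k - 1"
            using sw_i[OF k(1), of w0] sw_k[OF k(1), of w0] k(3) by auto
          have "w0 i + w0 k \<le> u i + u k" using dw0 dw du w(4) w0(2,3) by simp
          hence w0i: "w0 i < u i - 1" using \<open>\<not> w0 k \<le> ?t k\<close> tk by simp
          have "mdeg 2 ?w' = w0 i + w0 k" using mdeg2i[OF i, of ?w'] w'i w'k k_def lt2 by simp
          moreover have "?w' k < n"
          proof -
            have "w0 k \<le> n" using w0(3) w(2) k_def by simp
            thus ?thesis using w'k lt2 by linarith
          qed
          ultimately have dd: "mdeg 2 ?w' \<le> mdeg 2 u" and lk: "?w' k < n"
            using dw0 dw w(4) w0(2,3) by auto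
          have IH: "\<forall>w\<in>I. w (1-i) = ?w' k \<longrightarrow> w i \<le> u i - 1 \<longrightarrow> mdeg 2 w \<le> mdeg 2 u \<longrightarrow>
           swapvar (1-i) i u \<in> I" using less[OF lk] .
          have "?w' i \<le> u i - 1" using w'i w0i by linarith
          thus ?thesis using IH s dd k_def by blast
        qed
      qed
    qed
  qed
qed

lemma E: assumes I: "mono_ideal 2 I" and h: "EX2 I" shows "CP2 I"
  unfolding CP2_def
proof (intro ballI impI allI)
  fix u v i assume u: "u \<in> I" and v: "v \<in> I" and d: "mdeg 2 u = mdeg 2 v"
    and i: "i < 2" and lt: "v i < u i"
  have a: "v i \<le> u i - 1" using lt by linarith
  have b: "0 < u i" using lt by linarith
  show "swapvar (1-i) i u \<in> I"
    using E_aux[OF I h i u b, of "v (1-i)"] a v d by auto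
qed

theorem proposition2p5:
  fixes I :: "(nat \<Rightarrow> nat) set"
  assumes "mono_ideal 2 I"
  shows "(nonpure_dual_exchange 2 I \<longleftrightarrow> nonpure_exchange 2 I) \<and>
         (nonpure_exchange 2 I \<longleftrightarrow> componentwise_polymatroidal 2 I)"
proof -
  have e: "EX2 I \<longleftrightarrow> CP2 I" using D[OF assms] E[OF assms] by blast
  show ?thesis unfolding A[OF assms] B[OF assms] C[OF assms] e by simp
qed

end
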